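(* Let $N>3$. The maximum, over all behaviors $P\in\mathcal{J}_{N,2}$, of $$\frac{1}{N+1}P(0|0\cdots0)+\frac{1}{N+1}\sum_{k=1}^NP(1|e_k)-\frac{N}{N+1}$$ equals $$|\delta_{I2}|=\frac{2}{(N-2)(N-1)(N+1)},$$ and it is achieved by a behavior in $\mathcal{J}_{N,2}$ with $P(0|0\cdots0)=\frac{2}{N^2-3N+2}$ and $P(1|e_k)=1$ for all $k=1,\dots,N$.
   Context: A behavior on $N$ bits is a family $(P(a|\mathbf{x}))_{a\in\{0,1\},\mathbf{x}\in\{0,1\}^N}$ with $P(a|\mathbf{x})\ge0$ and $P(0|\mathbf{x})+P(1|\mathbf{x})=1$. $\mathcal{J}_{N,2}$ (the second-order interference set) is the set of behaviors satisfying, for every $M>2$, every subset $\{j_1,\dots,j_M\}\subseteq\{1,\dots,N\}$ and every fixed value of the remaining bits, $\sum_{x_{j_1},\dots,x_{j_M}\in\{0,1\}}(-1)^{\sum_lx_{j_l}}P(0|\mathbf{x})=0$. $e_k\in\{0,1\}^N$ is the string with a single $1$ in position $k$. *)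

theory Defs
  imports Complex_Main
begin

text \<open>A bit string x in {0,1}^N is encoded as the set of positions (in {1..N}) where it is 1.
  A behavior is P :: nat \<Rightarrow> nat set \<Rightarrow> real, with P a x the probability of outcome a \<in> {0,1}.\<close>

definition behavior :: "nat \<Rightarrow> (nat \<Rightarrow> nat set \<Rightarrow> real) \<Rightarrow> bool" where
  "behavior N P \<longleftrightarrow> (\<forall>x. x \<subseteq> {1..N} \<longrightarrow>
      P 0 x \<ge> 0 \<and> P 1 x \<ge> 0 \<and> P 0 x + P 1 x = 1)"

definition J2 :: "nat \<Rightarrow> (nat \<Rightarrow> nat set \<Rightarrow> real) set" where
  "J2 N = {P. behavior N P \<and>
     (\<forall>J R. J \<subseteq> {1..N} \<longrightarrow> card J > 2 \<longrightarrow> R \<subseteq> {1..N} - J \<longrightarrow>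
        (\<Sum>S\<in>Pow J. (-1::real) ^ card S * P 0 (R \<union> S)) = 0)}"

definition objective :: "nat \<Rightarrow> (nat \<Rightarrow> nat set \<Rightarrow> real) \<Rightarrow> real" where
  "objective N P = P 0 {} / (real N + 1) + (\<Sum>k=1..N. P 1 {k}) / (real N + 1)
      - real N / (real N + 1)"

end

theory Submission
  imports Defs
begin

lemma alt_step:
  fixes F :: "nat set \<Rightarrow> real" and J :: "nat set"
  assumes "finite J" "a \<notin> J"
  shows "(\<Sum>S\<in>Pow (insert a J). (-1)^card S * F S) = (\<Sum>S\<in>Pow J. (-1)^card S * (F S - F (insert a S)))"
proof -
  have fin: "finite (Pow J)" using assms by simp
  have dis: "Pow J \<inter> insert a ` Pow J = {}" using assms by auto
  have inj: "inj_on (insert a) (Pow J)" using assms unfolding inj_on_def by (auto simp: insert_ident)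
  have "(\<Sum>S\<in>Pow (insert a J). (-1)^card S * F S) = (\<Sum>S\<in>Pow J. (-1)^card S * F S) + (\<Sum>S\<in>insert a ` Pow J. (-1)^card S * F S)"
    unfolding Pow_insert using fin dis by (simp add: sum.union_disjoint)
  also have "(\<Sum>S\<in>insert a ` Pow J. (-1)^card S * F S) = (\<Sum>S\<in>Pow J. (-1)^card (insert a S) * F (insert a S))"
    using inj by (simp add: sum.reindex)
  also have "\<dots> = (\<Sum>S\<in>Pow J. - ((-1)^card S * F (insert a S)))"
  proof (rule sum.cong[OF refl])
    fix S assume "S \<in> Pow J"
    then have "finite S" "a \<notin> S" using assms finite_subset by auto
    then show "(-1)^card (insert a S) * F (insert a S) = - ((-1)^card S * F (insert a S))" by simp
  qed
  finally show ?thesis by (simp add: sum_subtractf[symmetric] algebra_simps sum_negf)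
qed

lemma alt0:
  fixes J :: "nat set"
  assumes "finite J" "card J \<ge> 1"
  shows "(\<Sum>S\<in>Pow J. (-1)^card S * (c::real)) = 0"
proof -
  obtain a J' where J: "J = insert a J'" "a \<notin> J'" using assms
    by (metis card_0_eq not_one_le_zero mk_disjoint_insert ex_in_conv)
  have "finite J'" using J assms by auto
  then show ?thesis using alt_step[of J' a "\<lambda>_. c"] J by simp
qed

lemma alt1:
  fixes J :: "nat set"
  assumes "finite J" "card J \<ge> 2"
  shows "(\<Sum>S\<in>Pow J. (-1)^card S * ((c::real) + d * real (card S))) = 0"
proof -
  obtain a J' where J: "J = insert a J'" "a \<notin> J'" using assms
    by (metis card_0_eq not_numeral_le_zero mk_disjoint_insert ex_in_conv)
  have f: "finite J'" using J assms by auto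
  have c: "card J' \<ge> 1" using J assms f by simp
  have "(\<Sum>S\<in>Pow J. (-1)^card S * (c + d * real (card S))) =
    (\<Sum>S\<in>Pow J'. (-1)^card S * ((c + d * real (card S)) - (c + d * real (card (insert a S)))))"
    using alt_step[OF f J(2), of "\<lambda>S. c + d * real (card S)"] J by simp
  also have "\<dots> = (\<Sum>S\<in>Pow J'. (-1)^card S * (-d))"
  proof (rule sum.cong[OF refl])
    fix S assume "S \<in> Pow J'"
    then have "finite S" "a \<notin> S" using J f finite_subset by auto
    then show "(-1)^card S * ((c + d * real (card S)) - (c + d * real (card (insert a S)))) = (-1)^card S * (-d)"
      by (simp add: algebra_simps)
  qed
  also have "\<dots> = 0" using alt0[OF f c] .
  finally show ?thesis .
qed

lemma alt2:
  fixes J :: "nat set"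
  assumes "finite J" "card J \<ge> 3"
  shows "(\<Sum>S\<in>Pow J. (-1)^card S * ((c::real) + d * real (card S) + e * real (card S)^2)) = 0"
proof -
  obtain a J' where J: "J = insert a J'" "a \<notin> J'" using assms
    by (metis card_0_eq not_numeral_le_zero mk_disjoint_insert ex_in_conv)
  have f: "finite J'" using J assms by auto
  have c: "card J' \<ge> 2" using J assms f by simp
  have "(\<Sum>S\<in>Pow J. (-1)^card S * (c + d * real (card S) + e * real (card S)^2)) =
    (\<Sum>S\<in>Pow J'. (-1)^card S * ((c + d * real (card S) + e * real (card S)^2) - (c + d * real (card (insert a S)) + e * real (card (insert a S))^2)))"
    using alt_step[OF f J(2), of "\<lambda>S. c + d * real (card S) + e * real (card S)^2"] J by simp
  also have "\<dots> = (\<Sum>S\<in>Pow J'. (-1)^card S * ((- d - e) + (- 2 * e) * real (card S)))"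
  proof (rule sum.cong[OF refl])
    fix S assume "S \<in> Pow J'"
    then have "finite S" "a \<notin> S" using J f finite_subset by auto
    then show "(-1)^card S * ((c + d * real (card S) + e * real (card S)^2) - (c + d * real (card (insert a S)) + e * real (card (insert a S))^2)) = (-1)^card S * ((- d - e) + (- 2 * e) * real (card S))"
      by (simp add: algebra_simps power2_eq_square)
  qed
  also have "\<dots> = 0" using alt1[OF f c] .
  finally show ?thesis .
qed

lemma swap_count:
  fixes f g :: "nat set \<Rightarrow> real"
  assumes "finite X" "\<And>P. P \<subseteq> X \<Longrightarrow> f P = (\<Sum>T\<in>Pow P. g T)"
  shows "(\<Sum>P\<in>{P. P \<subseteq> X \<and> card P = k}. f P) = (\<Sum>T\<in>Pow X. g T * real (card {P. P \<subseteq> X \<and> card P = k \<and> T \<subseteq> P}))"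
proof -
  let ?A = "{P. P \<subseteq> X \<and> card P = k}"
  have finA: "finite ?A" using assms(1) by (simp add: finite_subset[of _ "Pow X"] subset_iff)
  have "(\<Sum>P\<in>?A. f P) = (\<Sum>P\<in>?A. \<Sum>T\<in>Pow X. if T \<subseteq> P then g T else 0)"
  proof (rule sum.cong[OF refl])
    fix P assume P: "P \<in> ?A"
    have "(\<Sum>T\<in>Pow X. if T \<subseteq> P then g T else 0) = (\<Sum>T\<in>{T\<in>Pow X. T \<subseteq> P}. g T)"
      using assms(1) by (intro sum.inter_filter[symmetric]) auto
    also have "{T\<in>Pow X. T \<subseteq> P} = Pow P" using P by auto
    finally show "f P = (\<Sum>T\<in>Pow X. if T \<subseteq> P then g T else 0)" using P assms(2) by simp
  qed
  also have "\<dots> = (\<Sum>T\<in>Pow X. \<Sum>P\<in>?A. if T \<subseteq> P then g T else 0)"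
    by (rule sum.swap)
  also have "\<dots> = (\<Sum>T\<in>Pow X. g T * real (card {P. P \<subseteq> X \<and> card P = k \<and> T \<subseteq> P}))"
  proof (rule sum.cong[OF refl])
    fix T
    have "(\<Sum>P\<in>?A. if T \<subseteq> P then g T else 0) = (\<Sum>P\<in>{P\<in>?A. T \<subseteq> P}. g T)"
      using finA by (intro sum.inter_filter[symmetric]) auto
    also have "{P\<in>?A. T \<subseteq> P} = {P. P \<subseteq> X \<and> card P = k \<and> T \<subseteq> P}" by auto
    finally show "(\<Sum>P\<in>?A. if T \<subseteq> P then g T else 0) = g T * real (card {P. P \<subseteq> X \<and> card P = k \<and> T \<subseteq> P})"
      by simp
  qed
  finally show ?thesis .
qed

lemma count_sup:
  assumes "finite X" "T \<subseteq> X" "card T \<le> k"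
  shows "card {P. P \<subseteq> X \<and> card P = k \<and> T \<subseteq> P} = (card X - card T) choose (k - card T)"
proof -
  have fT: "finite T" using assms finite_subset by auto
  have eq: "{P. P \<subseteq> X \<and> card P = k \<and> T \<subseteq> P} = (\<lambda>Q. Q \<union> T) ` {Q. Q \<subseteq> X - T \<and> card Q = k - card T}"
  proof (rule set_eqI, rule iffI)
    fix P assume "P \<in> {P. P \<subseteq> X \<and> card P = k \<and> T \<subseteq> P}"
    then have P: "P \<subseteq> X" "card P = k" "T \<subseteq> P" by auto
    have "card (P - T) = k - card T" using P fT by (simp add: card_Diff_subset)
    moreover have "P = (P - T) \<union> T" using P by auto
    ultimately show "P \<in> (\<lambda>Q. Q \<union> T) ` {Q. Q \<subseteq> X - T \<and> card Q = k - card T}" using P by blast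
  next
    fix P assume "P \<in> (\<lambda>Q. Q \<union> T) ` {Q. Q \<subseteq> X - T \<and> card Q = k - card T}"
    then obtain Q where Q: "Q \<subseteq> X - T" "card Q = k - card T" "P = Q \<union> T" by auto
    have fQ: "finite Q" using Q assms finite_subset by blast
    have "card P = card Q + card T" using Q fQ fT by (simp add: card_Un_disjoint Int_commute Diff_disjoint disjoint_iff subset_iff)
    then show "P \<in> {P. P \<subseteq> X \<and> card P = k \<and> T \<subseteq> P}" using Q assms by auto
  qed
  have inj: "inj_on (\<lambda>Q. Q \<union> T) {Q. Q \<subseteq> X - T \<and> card Q = k - card T}"
    unfolding inj_on_def by blast
  have "card {P. P \<subseteq> X \<and> card P = k \<and> T \<subseteq> P} = card {Q. Q \<subseteq> X - T \<and> card Q = k - card T}"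
    unfolding eq by (rule card_image[OF inj])
  also have "\<dots> = card (X - T) choose (k - card T)" using assms by (simp add: n_subsets)
  also have "card (X - T) = card X - card T" using assms fT by (simp add: card_Diff_subset)
  finally show ?thesis .
qed

lemma count_sup0:
  assumes "finite X" "k < card T"
  shows "card {P. P \<subseteq> X \<and> card P = k \<and> T \<subseteq> P} = 0"
proof -
  have "{P. P \<subseteq> X \<and> card P = k \<and> T \<subseteq> P} = {}"
    using assms by (auto dest: card_mono[OF finite_subset])
  then show ?thesis by (metis card.empty)
qed

lemma group3:
  fixes g :: "nat set \<Rightarrow> real"
  assumes "finite X" "\<And>T. T \<subseteq> X \<Longrightarrow> card T > 2 \<Longrightarrow> g T = 0"
  shows "(\<Sum>T\<in>Pow X. g T * c (card T)) =
     c 0 * (\<Sum>T\<in>{T. T \<subseteq> X \<and> card T = 0}. g T) + c 1 * (\<Sum>T\<in>{T. T \<subseteq> X \<and> card T = 1}. g T)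
     + c 2 * (\<Sum>T\<in>{T. T \<subseteq> X \<and> card T = 2}. g T)"
proof -
  let ?A = "\<lambda>j. {T. T \<subseteq> X \<and> card T = j}"
  have fin: "\<And>j. finite (?A j)" using assms(1) by (simp add: finite_subset[of _ "Pow X"] subset_iff)
  have "(\<Sum>T\<in>Pow X. g T * c (card T)) = (\<Sum>T\<in>?A 0 \<union> ?A 1 \<union> ?A 2. g T * c (card T))"
    apply (rule sum.mono_neutral_right)
    using assms(1) apply simp
     apply blast
    apply clarsimp
    subgoal for i using assms(2)[of i] by linarith
    done
  also have "\<dots> = (\<Sum>T\<in>?A 0. g T * c (card T)) + (\<Sum>T\<in>?A 1. g T * c (card T)) + (\<Sum>T\<in>?A 2. g T * c (card T))"
  proof -
    have "(\<Sum>T\<in>?A 0 \<union> ?A 1 \<union> ?A 2. g T * c (card T)) = (\<Sum>T\<in>?A 0 \<union> ?A 1. g T * c (card T)) + (\<Sum>T\<in>?A 2. g T * c (card T))"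
      by (rule sum.union_disjoint) (use fin in auto)
    moreover have "(\<Sum>T\<in>?A 0 \<union> ?A 1. g T * c (card T)) = (\<Sum>T\<in>?A 0. g T * c (card T)) + (\<Sum>T\<in>?A 1. g T * c (card T))"
      by (rule sum.union_disjoint) (use fin in auto)
    ultimately show ?thesis by simp
  qed
  also have "\<dots> = (\<Sum>T\<in>?A 0. g T * c 0) + (\<Sum>T\<in>?A 1. g T * c 1) + (\<Sum>T\<in>?A 2. g T * c 2)"
    by (intro arg_cong2[where f="(+)"] sum.cong) auto
  also have "\<dots> = c 0 * (\<Sum>T\<in>?A 0. g T) + c 1 * (\<Sum>T\<in>?A 1. g T) + c 2 * (\<Sum>T\<in>?A 2. g T)"
    by (simp add: sum_distrib_left mult.commute)
  finally show ?thesis .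
qed


lemma choose2_real: "real (N choose 2) = real N * (real N - 1) / 2"
proof (induct N)
  case 0 then show ?case by simp
next
  case (Suc n)
  have "Suc n choose 2 = n + (n choose 2)" by (simp add: numeral_2_eq_2)
  then show ?case using Suc by (simp add: field_simps)
qed

lemma quad_nonneg: "(real (w::nat) - 1) * (real w - 2) \<ge> 0"
proof (cases "w \<le> 1")
  case True then show ?thesis by (intro mult_nonpos_nonpos) auto
next
  case False then show ?thesis by (intro mult_nonneg_nonneg) auto
qed

lemma quad_le:
  assumes "(w::nat) \<le> N" "N > 3"
  shows "(real w - 1) * (real w - 2) \<le> (real N - 1) * (real N - 2)"
proof (cases "w \<le> 1")
  case True
  then have "w = 0 \<or> w = 1" by auto
  moreover have "(real N - 1) * (real N - 2) \<ge> 3 * 2"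
    using assms by (intro mult_mono) auto
  ultimately show ?thesis by auto
next
  case False then show ?thesis using assms by (intro mult_mono) auto
qed

theorem theorem2:
  fixes N :: nat
  assumes "N > 3"
  shows "(\<forall>P\<in>J2 N. objective N P \<le> 2 / ((real N - 2) * (real N - 1) * (real N + 1)))
       \<and> (\<exists>P\<in>J2 N. objective N P = 2 / ((real N - 2) * (real N - 1) * (real N + 1))
              \<and> P 0 {} = 2 / ((real N)^2 - 3 * real N + 2)
              \<and> (\<forall>k\<in>{1..N}. P 1 {k} = 1))"
proof
  define X where "X = {1..N}"
  have finX: "finite X" and cardX: "card X = N" by (simp_all add: X_def)
  have n3: "real N > 3" using assms by simp
  show "\<forall>P\<in>J2 N. objective N P \<le> 2 / ((real N - 2) * (real N - 1) * (real N + 1))"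
  proof
    fix P assume PJ: "P \<in> J2 N"
    define f where "f = P 0"
    have beh: "\<And>x. x \<subseteq> X \<Longrightarrow> f x \<ge> 0 \<and> P 1 x \<ge> 0 \<and> f x + P 1 x = 1"
      using PJ unfolding J2_def behavior_def f_def X_def by auto
    have int: "(\<Sum>S\<in>Pow T. (-1::real)^card S * f S) = 0" if "T \<subseteq> X" "card T > 2" for T
    proof -
      have "(\<Sum>S\<in>Pow T. (-1::real)^card S * P 0 ({} \<union> S)) = 0"
        using PJ that unfolding J2_def X_def by blast
      then show ?thesis by (simp add: f_def)
    qed
    define h where "h S = (\<Sum>T\<in>Pow S. (-1::real)^card T * f T)" for S
    define g where "g T = (-1::real)^card T * h T" for T
    have rep: "f S = (\<Sum>T\<in>Pow S. g T)" if "S \<subseteq> X" for S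
      unfolding g_def by (rule inclusion_exclusion_symmetric[of h f]) (use that finX finite_subset in \<open>auto simp: h_def\<close>)
    have g0: "g T = 0" if "T \<subseteq> X" "card T > 2" for T
      using int[OF that] by (simp add: g_def h_def)
    define G where "G j = (\<Sum>T\<in>{T. T \<subseteq> X \<and> card T = j}. g T)" for j
    have grp: "(\<Sum>T\<in>Pow X. g T * c (card T)) = c 0 * G 0 + c 1 * G 1 + c 2 * G 2" for c
      unfolding G_def by (rule group3[OF finX]) (rule g0)
    have s0: "f {} = G 0"
    proof -
      have "{T. T \<subseteq> X \<and> card T = 0} = {{}}" using finX by (auto dest: finite_subset)
      then show ?thesis using rep[of "{}"] by (simp add: G_def)
    qed
    have sN: "f X = G 0 + G 1 + G 2"
      using rep[of X] grp[of "\<lambda>_. 1"] by simp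
    have s1: "(\<Sum>k=1..N. f {k}) = real N * G 0 + G 1"
    proof -
      have "(\<Sum>k=1..N. f {k}) = (\<Sum>P\<in>{P. P \<subseteq> X \<and> card P = 1}. f P)"
      proof -
        have "{P. P \<subseteq> X \<and> card P = 1} = (\<lambda>k. {k}) ` {1..N}" by (auto simp: X_def card_1_singleton_iff)
        then show ?thesis by (simp add: sum.reindex)
      qed
      also have "\<dots> = (\<Sum>T\<in>Pow X. g T * real (card {P. P \<subseteq> X \<and> card P = 1 \<and> T \<subseteq> P}))"
        by (rule swap_count[OF finX rep])
      also have "\<dots> = (\<Sum>T\<in>Pow X. g T * (\<lambda>j. if j \<le> 1 then real ((N - j) choose (1 - j)) else 0) (card T))"
        apply (rule sum.cong[OF refl])
        subgoal for T by (cases "card T \<le> 1") (simp_all add: count_sup count_sup0 finX cardX)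
        done
      also have "\<dots> = real N * G 0 + G 1" by (subst grp) simp
      finally show ?thesis .
    qed
    have s2: "(\<Sum>P\<in>{P. P \<subseteq> X \<and> card P = 2}. f P) = real N * (real N - 1) / 2 * G 0 + (real N - 1) * G 1 + G 2"
    proof -
      have "(\<Sum>P\<in>{P. P \<subseteq> X \<and> card P = 2}. f P) = (\<Sum>T\<in>Pow X. g T * real (card {P. P \<subseteq> X \<and> card P = 2 \<and> T \<subseteq> P}))"
        by (rule swap_count[OF finX rep])
      also have "\<dots> = (\<Sum>T\<in>Pow X. g T * (\<lambda>j. if j \<le> 2 then real ((N - j) choose (2 - j)) else 0) (card T))"
        apply (rule sum.cong[OF refl])
        subgoal for T by (cases "card T \<le> 2") (simp_all add: count_sup count_sup0 finX cardX)
        done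
      also have "\<dots> = real N * (real N - 1) / 2 * G 0 + (real N - 1) * G 1 + G 2"
        using assms by (subst grp) (simp add: choose2_real of_nat_diff)
      finally show ?thesis .
    qed
    have nn1: "(\<Sum>k=1..N. f {k}) \<ge> 0" using beh by (intro sum_nonneg) (auto simp: X_def)
    have nn2: "(\<Sum>P\<in>{P. P \<subseteq> X \<and> card P = 2}. f P) \<ge> 0" using beh by (intro sum_nonneg) auto
    have le1: "f X \<le> 1" using beh[of X] by auto
    have obj: "objective N P = (f {} - (\<Sum>k=1..N. f {k})) / (real N + 1)"
    proof -
      have "(\<Sum>k=1..N. P 1 {k}) = (\<Sum>k=1..N. 1 - f {k})"
        by (rule sum.cong[OF refl]) (use beh in \<open>auto simp: X_def eq_diff_eq add.commute\<close>)
      also have "\<dots> = real N - (\<Sum>k=1..N. f {k})" by (simp add: sum_subtractf)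
      finally have e: "(\<Sum>k=1..N. P 1 {k}) = real N - (\<Sum>k=1..N. f {k})" .
      have "objective N P = f {} / (real N + 1) + (real N - (\<Sum>k=1..N. f {k})) / (real N + 1) - real N / (real N + 1)"
        unfolding objective_def e by (simp add: f_def)
      also have "\<dots> = (f {} - (\<Sum>k=1..N. f {k})) / (real N + 1)"
        by (simp add: diff_divide_distrib add_divide_distrib)
      finally show ?thesis .
    qed
    define a where "a = f {} - (\<Sum>k=1..N. f {k})"
    have key: "(real N - 1) * (real N - 2) * a = 2 * f X - 2 * (\<Sum>P\<in>{P. P \<subseteq> X \<and> card P = 2}. f P) - (real N - 3) * (real N - 2) * (\<Sum>k=1..N. f {k})"
      unfolding a_def s0 s1 s2 sN by (simp add: field_simps)
    have "(real N - 3) * (real N - 2) * (\<Sum>k=1..N. f {k}) \<ge> 0" using n3 nn1 by simp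
    then have "(real N - 1) * (real N - 2) * a \<le> 2" using key nn2 le1 by linarith
    then have "a \<le> 2 / ((real N - 1) * (real N - 2))" using n3 by (simp add: pos_le_divide_eq mult.commute)
    then have "a / (real N + 1) \<le> 2 / ((real N - 1) * (real N - 2)) / (real N + 1)"
      using n3 by (intro divide_right_mono) auto
    then show "objective N P \<le> 2 / ((real N - 2) * (real N - 1) * (real N + 1))"
      unfolding obj a_def[symmetric] by (simp add: mult.commute mult.left_commute)
  qed
next
  define D where "D = (real N - 1) * (real N - 2)"
  have n3: "real N > 3" using assms by simp
  have Dpos: "D > 0" unfolding D_def using n3 by simp
  define q where "q w = (real w - 1) * (real w - 2) / D" for w :: nat
  define P where "P a S = (if a = (0::nat) then q (card S) else 1 - q (card S))" for a and S :: "nat set"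
  have beh: "behavior N P"
    unfolding behavior_def
  proof (intro allI impI)
    fix x assume x: "x \<subseteq> {1..N}"
    then have "card x \<le> N" using card_mono[OF finite_atLeastAtMost x] by simp
    then have "q (card x) \<le> 1" "q (card x) \<ge> 0" unfolding q_def D_def
      using Dpos quad_le[of "card x" N] assms quad_nonneg[of "card x"]
      by (auto simp: D_def divide_le_eq_1)
    then show "0 \<le> P 0 x \<and> 0 \<le> P 1 x \<and> P 0 x + P 1 x = 1" by (simp add: P_def)
  qed
  have alt: "(\<Sum>S\<in>Pow J. (-1::real) ^ card S * P 0 (R \<union> S)) = 0"
    if J: "J \<subseteq> {1..N}" "card J > 2" "R \<subseteq> {1..N} - J" for J R
  proof -
    have fJ: "finite J" using J finite_subset by blast
    have fR: "finite R" using J finite_subset by blast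
    define r where "r = real (card R)"
    have "(\<Sum>S\<in>Pow J. (-1::real) ^ card S * P 0 (R \<union> S)) =
      (\<Sum>S\<in>Pow J. (-1::real) ^ card S * ((r - 1) * (r - 2) / D + (2 * r - 3) / D * real (card S) + 1 / D * real (card S)^2))"
    proof (rule sum.cong[OF refl])
      fix S assume S: "S \<in> Pow J"
      then have "finite S" "R \<inter> S = {}" using fJ finite_subset J by auto
      then have "card (R \<union> S) = card R + card S" using fR by (simp add: card_Un_disjoint)
      then show "(-1::real) ^ card S * P 0 (R \<union> S) = (-1::real) ^ card S * ((r - 1) * (r - 2) / D + (2 * r - 3) / D * real (card S) + 1 / D * real (card S)^2)"
        using Dpos by (simp add: P_def q_def r_def field_simps power2_eq_square)
    qed
    also have "\<dots> = 0" using J by (intro alt2[OF fJ]) simp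
    finally show ?thesis .
  qed
  have PJ: "P \<in> J2 N" unfolding J2_def using beh alt by blast
  have q0: "q 0 = 2 / D" by (simp add: q_def)
  have q1: "q (Suc 0) = 0" by (simp add: q_def)
  have obj: "objective N P = 2 / ((real N - 2) * (real N - 1) * (real N + 1))"
  proof -
    have "(\<Sum>k=1..N. P 1 {k}) = real N" by (simp add: P_def q1)
    moreover have "P 0 {} = 2 / D" by (simp add: P_def q0)
    ultimately have "objective N P = 2 / D / (real N + 1)"
      unfolding objective_def by (simp add: diff_divide_distrib add_divide_distrib)
    then show ?thesis by (simp add: D_def mult.commute mult.left_commute)
  qed
  have P0: "P 0 {} = 2 / ((real N)^2 - 3 * real N + 2)"
    by (simp add: P_def q0 D_def algebra_simps power2_eq_square)
  show "\<exists>P\<in>J2 N. objective N P = 2 / ((real N - 2) * (real N - 1) * (real N + 1))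
              \<and> P 0 {} = 2 / ((real N)^2 - 3 * real N + 2)
              \<and> (\<forall>k\<in>{1..N}. P 1 {k} = 1)"
    using PJ obj P0 by (intro bexI[of _ P]) (auto simp: P_def q1)
qed

end
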